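(* In $\mathbb{R}^3$, for $r>0$ let $C_r=[0,\tfrac14]\times D_r$, where $D_r\subset\mathbb{R}^2$ is the disc of radius $r$ centred at $0$ (writing $z=(z_1,\mathbf z_2)$, $\mathbf z_2\in\mathbb{R}^2$). For $r\in(0,e^{-1})$ put $\varrho(r)=\frac{1}{r^2|\ln r|\ln|\ln r|}$ and $U_r(z)=\varrho(r)\mathbf 1_{C_r}(z)$. Then $$\lim_{\varepsilon\to0^+}\ \sup_{x\in\mathbb{R}^3,\ r\in(0,1/5)}\int_{|z-x|<\varepsilon}\frac{|U_r(z)|}{|z-x|}\,dz=0.$$ *)

theory Defs
  imports "HOL-Analysis.Analysis"
begin

text \<open>Points of R^3 are vectors z :: real^3 with components z$1 (the axial coordinate z_1)
and (z$2, z$3) (the planar coordinate \<zz>_2).\<close>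

definition cyl :: "real \<Rightarrow> (real^3) set" where
  "cyl r = {z. 0 \<le> z$1 \<and> z$1 \<le> 1/4 \<and> (z$2)\<^sup>2 + (z$3)\<^sup>2 \<le> r\<^sup>2}"

definition varrho :: "real \<Rightarrow> real" where
  "varrho r = 1 / (r\<^sup>2 * \<bar>ln r\<bar> * ln \<bar>ln r\<bar>)"

definition U :: "real \<Rightarrow> real^3 \<Rightarrow> real" where
  "U r z = varrho r * indicator (cyl r) z"

end

theory Submission
  imports Defs "HOL-Real_Asymp.Real_Asymp"
begin



definition Q :: "real \<Rightarrow> (real^3) set" where
  "Q r = cbox (\<chi> i. if i = 1 then 0 else -r) (\<chi> i. if i = 1 then 1/4 else r)"

lemma S_sets: "cball x \<rho> \<inter> Q r \<in> sets lborel"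
  unfolding Q_def by (simp add: closed_Int borel_closed)

lemma meas_S:
  fixes x :: "real^3"
  assumes "0 < \<rho>" "0 < r"
  shows "emeasure lborel (cball x \<rho> \<inter> Q r) \<le> ennreal (8 * \<rho> * (min \<rho> r)\<^sup>2)"
proof -
  define a :: "real^3" where "a = (\<chi> i. if i = 1 then x$1 - \<rho> else if \<rho> \<le> r then x$i - \<rho> else -r)"
  define b :: "real^3" where "b = (\<chi> i. if i = 1 then x$1 + \<rho> else if \<rho> \<le> r then x$i + \<rho> else r)"
  have sub: "cball x \<rho> \<inter> Q r \<subseteq> cbox a b"
  proof
    fix z assume z: "z \<in> cball x \<rho> \<inter> Q r"
    have "\<bar>(x - z)$i\<bar> \<le> \<rho>" for i
      using z component_le_norm_cart[of "x - z" i] by (auto simp: dist_norm)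
    hence c: "\<bar>x$i - z$i\<bar> \<le> \<rho>" for i by simp
    have zq: "z \<in> Q r" using z by simp
    have q: "-r \<le> z$i \<and> z$i \<le> r" if "i \<noteq> 1" for i
    proof -
      have "(if i = 1 then 0 else -r) \<le> z$i \<and> z$i \<le> (if i = 1 then 1/4 else r)"
        using zq unfolding Q_def mem_box_cart by simp
      then show ?thesis using that by simp
    qed
    show "z \<in> cbox a b"
      unfolding mem_box_cart a_def b_def
    proof (intro allI)
      fix i
      show "(\<chi> i. if i = 1 then x$1 - \<rho> else if \<rho> \<le> r then x$i - \<rho> else -r) $ i \<le> z $ i \<and>
        z $ i \<le> (\<chi> i. if i = 1 then x$1 + \<rho> else if \<rho> \<le> r then x$i + \<rho> else r) $ i"
        using c[of i] q[of i] by (cases "i = 1") (auto simp: abs_le_iff)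
    qed
  qed
  have "emeasure lborel (cball x \<rho> \<inter> Q r) \<le> emeasure lborel (cbox a b)"
    by (rule emeasure_mono[OF sub]) simp
  also have "\<dots> = ennreal (measure lborel (cbox a b))"
    by (rule emeasure_eq_ennreal_measure) (use emeasure_lborel_cbox_finite[of a b] in auto)
  also have "measure lborel (cbox a b) \<le> 8 * \<rho> * (min \<rho> r)\<^sup>2"
  proof (cases "cbox a b = {}")
    case True then show ?thesis using assms by simp
  next
    case False
    then have "measure lborel (cbox a b) = (b$1 - a$1) * (b$2 - a$2) * (b$3 - a$3)"
      unfolding content_cbox_cart[OF False] UNIV_3 by (simp add: mult.assoc)
    also have "\<dots> = 8 * \<rho> * (min \<rho> r)\<^sup>2"
      using assms by (simp add: a_def b_def power2_eq_square min_def)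
    finally show ?thesis by simp
  qed
  finally show ?thesis by (simp add: ennreal_leI)
qed


lemma g_summable:
  fixes \<epsilon> r :: real assumes "0 < \<epsilon>" "0 < r"
  shows "summable (\<lambda>k::nat. (min (\<epsilon>/2^k) r)\<^sup>2)"
    and "(\<Sum>k. (min (\<epsilon>/2^k) r)\<^sup>2) \<le> 4/3 * \<epsilon>\<^sup>2"
proof -
  have geo: "(\<lambda>k::nat. \<epsilon>\<^sup>2 * (1/4)^k) sums (\<epsilon>\<^sup>2 * (4/3))"
    using sums_mult[OF geometric_sums[of "1/4::real"], of "\<epsilon>\<^sup>2"] by simp
  have le: "(min (\<epsilon>/2^k) r)\<^sup>2 \<le> \<epsilon>\<^sup>2 * (1/4)^k" for k :: nat
  proof -
    have "(min (\<epsilon>/2^k) r)\<^sup>2 \<le> (\<epsilon>/2^k)\<^sup>2"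
      using assms by (intro power_mono) auto
    also have "\<dots> = \<epsilon>\<^sup>2 * (1/4)^k"
      proof -
      have "(2::real)^k * 2^k = 4^k" by (simp flip: power_mult_distrib)
      then show ?thesis by (simp add: power2_eq_square power_one_over)
    qed
    finally show ?thesis .
  qed
  show sm: "summable (\<lambda>k::nat. (min (\<epsilon>/2^k) r)\<^sup>2)"
    by (rule summable_comparison_test[of _ "\<lambda>k. \<epsilon>\<^sup>2 * (1/4)^k"]) (use le geo sums_summable in auto)
  have "(\<Sum>k. (min (\<epsilon>/2^k) r)\<^sup>2) \<le> (\<Sum>k. \<epsilon>\<^sup>2 * (1/4::real)^k)"
    by (rule suminf_le[OF le sm]) (use geo sums_summable in auto)
  also have "\<dots> = 4/3 * \<epsilon>\<^sup>2" using geo sums_unique by fastforce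
  finally show "(\<Sum>k. (min (\<epsilon>/2^k) r)\<^sup>2) \<le> 4/3 * \<epsilon>\<^sup>2" .
qed

lemma g_small:
  fixes \<epsilon> r :: real assumes "0 < r" "r < \<epsilon>"
  shows "(\<Sum>k. (min (\<epsilon>/2^k) r)\<^sup>2) \<le> (log 2 (\<epsilon>/r) + 1 + 4/3) * r\<^sup>2"
proof -
  have ep: "0 < \<epsilon>" using assms by simp
  define N where "N = nat \<lceil>log 2 (\<epsilon>/r)\<rceil>"
  have lg: "0 < log 2 (\<epsilon>/r)" using assms by simp
  have N1: "real N \<le> log 2 (\<epsilon>/r) + 1" unfolding N_def using lg by linarith
  have N2: "log 2 (\<epsilon>/r) \<le> real N" unfolding N_def using lg by linarith
  have "\<epsilon>/r = 2 powr (log 2 (\<epsilon>/r))" using assms by simp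
  also have "\<dots> \<le> 2 powr (real N)" using N2 by simp
  also have "\<dots> = 2^N" by (simp add: powr_realpow)
  finally have "\<epsilon>/r \<le> 2^N" .
  hence eN: "\<epsilon>/2^N \<le> r" using assms by (simp add: field_simps)
  note sm = g_summable(1)[OF ep assms(1)]
  have split: "(\<Sum>k. (min (\<epsilon>/2^k) r)\<^sup>2) = (\<Sum>j. (min (\<epsilon>/2^(j+N)) r)\<^sup>2) + (\<Sum>k<N. (min (\<epsilon>/2^k) r)\<^sup>2)"
    by (rule suminf_split_initial_segment[OF sm])
  have B: "(\<Sum>k<N. (min (\<epsilon>/2^k) r)\<^sup>2) \<le> real N * r\<^sup>2"
  proof -
    have "(\<Sum>k<N. (min (\<epsilon>/2^k) r)\<^sup>2) \<le> (\<Sum>k<N. r\<^sup>2)"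
      by (intro sum_mono power_mono) (use assms in auto)
    then show ?thesis by simp
  qed
  have "(\<Sum>j. (min (\<epsilon>/2^(j+N)) r)\<^sup>2) = (\<Sum>j. (min ((\<epsilon>/2^N)/2^j) r)\<^sup>2)"
    by (simp add: power_add mult.commute divide_divide_eq_left)
  also have "\<dots> \<le> 4/3 * (\<epsilon>/2^N)\<^sup>2"
    by (rule g_summable(2)) (use assms in auto)
  also have "\<dots> \<le> 4/3 * r\<^sup>2"
    using eN ep by (intro mult_left_mono power_mono) auto
  finally have A: "(\<Sum>j. (min (\<epsilon>/2^(j+N)) r)\<^sup>2) \<le> 4/3 * r\<^sup>2" .
  have "real N * r\<^sup>2 \<le> (log 2 (\<epsilon>/r) + 1) * r\<^sup>2"
    using N1 by (intro mult_right_mono) auto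
  then show ?thesis using split A B by (simp add: algebra_simps)
qed


lemma ln5: "4/3 \<le> ln (5::real)"
proof -
  have "ln (4::real) = 2 * ln 2" using ln_realpow[of 2 2] by simp
  moreover have "ln (4::real) \<le> ln 5" by simp
  ultimately show ?thesis using ln2_ge_two_thirds by linarith
qed

lemma ln_lower: "0 < (x::real) \<Longrightarrow> 1 - 1/x \<le> ln x"
  using ln_le_minus_one[of "1/x"] by (simp add: ln_div)

lemma L_facts:
  fixes r :: real assumes "0 < r" "r < 1/5"
  shows "4/3 \<le> - ln r" "1/4 \<le> ln (- ln r)" "\<bar>ln r\<bar> = - ln r"
proof -
  have "ln r < ln (1/5)" using assms by simp
  then show L: "4/3 \<le> - ln r" using ln5 by (simp add: ln_div)
  show "\<bar>ln r\<bar> = - ln r" using L by simp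
  have "1 - 1/(- ln r) \<le> ln (- ln r)" using L by (intro ln_lower) simp
  moreover have "1/(- ln r) \<le> 3/4" using L by (simp add: field_simps)
  ultimately show "1/4 \<le> ln (- ln r)" by simp
qed

definition h :: "real \<Rightarrow> real" where
  "h e = 56 / ln (- ln e) + 171 / (- ln e) + 64 * e"


lemma bound_small_r:
  fixes \<epsilon> r :: real assumes "0 < r" "r < \<epsilon>" "\<epsilon> < 1/16"
  shows "16 * varrho r * ((log 2 (\<epsilon>/r) + 1 + 4/3) * r\<^sup>2) \<le> 56 / ln (- ln \<epsilon>)"
proof -
  have r5: "r < 1/5" using assms by simp
  note Lf = L_facts[OF assms(1) r5]
  define L where "L = - ln r"
  have Lp: "4/3 \<le> L" "1/4 \<le> ln L" using Lf L_def by auto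
  have lne: "ln \<epsilon> \<le> 0" using assms by simp
  have lnq: "0 < ln (\<epsilon>/r)" using assms by simp
  have lnq2: "ln (\<epsilon>/r) \<le> L" using assms lne by (simp add: ln_div L_def)
  have "log 2 (\<epsilon>/r) = ln (\<epsilon>/r) / ln 2" by (simp add: log_def)
  also have "\<dots> \<le> ln (\<epsilon>/r) / (2/3)"
    using lnq ln2_ge_two_thirds by (intro divide_left_mono) auto
  also have "\<dots> \<le> 3/2 * L" using lnq2 by simp
  finally have lg: "log 2 (\<epsilon>/r) + 1 + 4/3 \<le> 7/2 * L" using Lp by linarith
  have vr: "varrho r = 1 / (r\<^sup>2 * L * ln L)"
    unfolding varrho_def Lf(3) L_def by simp
  have "16 * varrho r * ((log 2 (\<epsilon>/r) + 1 + 4/3) * r\<^sup>2) = 16 * (log 2 (\<epsilon>/r) + 1 + 4/3) / (L * ln L)"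
    unfolding vr using assms(1) by simp
  also have "\<dots> \<le> 16 * (7/2 * L) / (L * ln L)"
    using lg Lp by (intro divide_right_mono mult_left_mono) auto
  also have "\<dots> = 56 / ln L" using Lp by simp
  also have "\<dots> \<le> 56 / ln (- ln \<epsilon>)"
  proof -
    have e1: "1 < - ln \<epsilon>"
    proof -
      have "ln \<epsilon> < ln (1/16)" using assms by simp
      moreover have "ln (1/16::real) = - (4 * ln 2)" using ln_realpow[of 2 4] by (simp add: ln_div)
      ultimately show ?thesis using ln2_ge_two_thirds by linarith
    qed
    have "- ln \<epsilon> \<le> L" using assms by (simp add: L_def)
    then have "ln (- ln \<epsilon>) \<le> ln L" using e1 by simp
    moreover have "0 < ln (- ln \<epsilon>)" using e1 by simp
    ultimately show ?thesis by (intro divide_left_mono) auto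
  qed
  finally show ?thesis .
qed


lemma e_facts: fixes \<epsilon> :: real assumes "0 < \<epsilon>" "\<epsilon> < 1/16"
  shows "1 < - ln \<epsilon>" "0 < ln (- ln \<epsilon>)"
proof -
  have "ln \<epsilon> < ln (1/16)" using assms by simp
  moreover have "ln (1/16::real) = - (4 * ln 2)" using ln_realpow[of 2 4] by (simp add: ln_div)
  ultimately show e1: "1 < - ln \<epsilon>" using ln2_ge_two_thirds by linarith
  then show "0 < ln (- ln \<epsilon>)" by simp
qed

lemma bound_large_r:
  fixes \<epsilon> r :: real assumes "0 < \<epsilon>" "\<epsilon> \<le> r" "r < 1/5" "\<epsilon> < 1/16"
  shows "16 * varrho r * (4/3 * \<epsilon>\<^sup>2) \<le> 171 / (- ln \<epsilon>) + 64 * \<epsilon>"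
proof -
  have r0: "0 < r" using assms by simp
  note Lf = L_facts[OF r0 assms(3)]
  note Ef = e_facts[OF assms(1) assms(4)]
  define L where "L = - ln r"
  have Lp: "4/3 \<le> L" "1/4 \<le> ln L" using Lf L_def by auto
  have vr: "varrho r = 1 / (r\<^sup>2 * L * ln L)"
    unfolding varrho_def Lf(3) L_def by simp
  have eq: "16 * varrho r * (4/3 * \<epsilon>\<^sup>2) = (64/3) * (\<epsilon>\<^sup>2 / r\<^sup>2) / (L * ln L)"
    unfolding vr using r0 by simp
  show ?thesis
  proof (cases "r\<^sup>2 \<le> \<epsilon>")
    case True
    have "2 * ln r \<le> ln \<epsilon>" 
    proof -
      have "ln (r\<^sup>2) \<le> ln \<epsilon>" using True r0 assms(1) by simp
      moreover have "ln (r\<^sup>2) = 2 * ln r" using ln_realpow[of r 2] r0 by simp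
      ultimately show ?thesis by simp
    qed
    hence LL: "- ln \<epsilon> / 2 \<le> L" by (simp add: L_def)
    have q: "\<epsilon>\<^sup>2 / r\<^sup>2 \<le> 1" using assms r0 by (simp add: power_mono)
    have "(64/3) * (\<epsilon>\<^sup>2 / r\<^sup>2) / (L * ln L) \<le> (64/3) * 1 / ((- ln \<epsilon> / 2) * (1/4))"
      using q LL Lp Ef by (intro divide_mono mult_mono mult_left_mono) auto
    also have "\<dots> \<le> 171 / (- ln \<epsilon>)" using Ef by (simp add: field_simps)
    finally have X: "(64/3) * (\<epsilon>\<^sup>2 / r\<^sup>2) / (L * ln L) \<le> 171 / (- ln \<epsilon>)" .
    show ?thesis using eq X assms(1) by linarith
  next
    case False
    have q: "\<epsilon>\<^sup>2 / r\<^sup>2 \<le> \<epsilon>" using False assms r0 by (simp add: field_simps power2_eq_square)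
    have "(64/3) * (\<epsilon>\<^sup>2 / r\<^sup>2) / (L * ln L) \<le> (64/3) * \<epsilon> / ((4/3) * (1/4))"
      using q Lp by (intro divide_mono mult_mono mult_left_mono) auto
    also have "\<dots> = 64 * \<epsilon>" by simp
    finally have X: "(64/3) * (\<epsilon>\<^sup>2 / r\<^sup>2) / (L * ln L) \<le> 64 * \<epsilon>" .
    have "0 \<le> 171 / (- ln \<epsilon>)" using Ef by simp
    then show ?thesis using eq X by linarith
  qed
qed


lemma real_bound:
  fixes \<epsilon> r :: real assumes "0 < r" "r < 1/5" "0 < \<epsilon>" "\<epsilon> < 1/16"
  shows "16 * varrho r * (\<Sum>k. (min (\<epsilon>/2^k) r)\<^sup>2) \<le> h \<epsilon>"
proof -
  note Lf = L_facts[OF assms(1,2)]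
  note Ef = e_facts[OF assms(3,4)]
  have "0 < r\<^sup>2 * (- ln r) * ln (- ln r)" using Lf assms by (intro mult_pos_pos) auto
  then have vp: "0 \<le> varrho r" unfolding varrho_def Lf(3) by simp
  have t1: "0 \<le> 56 / ln (- ln \<epsilon>)" "0 \<le> 171 / (- ln \<epsilon>)" "0 \<le> 64 * \<epsilon>" using Ef assms by auto
  show ?thesis
  proof (cases "r < \<epsilon>")
    case True
    have "16 * varrho r * (\<Sum>k. (min (\<epsilon>/2^k) r)\<^sup>2) \<le> 16 * varrho r * ((log 2 (\<epsilon>/r) + 1 + 4/3) * r\<^sup>2)"
      using g_small[OF assms(1) True] vp by (intro mult_left_mono) auto
    also have "\<dots> \<le> 56 / ln (- ln \<epsilon>)" using bound_small_r[OF assms(1) True assms(4)] .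
    finally show ?thesis unfolding h_def using t1 by linarith
  next
    case False
    have "16 * varrho r * (\<Sum>k. (min (\<epsilon>/2^k) r)\<^sup>2) \<le> 16 * varrho r * (4/3 * \<epsilon>\<^sup>2)"
      using g_summable(2)[OF assms(3,1)] vp by (intro mult_left_mono) auto
    also have "\<dots> \<le> 171 / (- ln \<epsilon>) + 64 * \<epsilon>"
      using bound_large_r[OF assms(3) _ assms(2,4)] False by simp
    finally show ?thesis unfolding h_def using t1 by linarith
  qed
qed

lemma exists_k:
  fixes d \<epsilon> :: real assumes "0 < d" "d < \<epsilon>"
  shows "\<exists>k::nat. \<epsilon>/2^(k+1) < d \<and> d \<le> \<epsilon>/2^k"
proof -
  define k where "k = nat \<lfloor>log 2 (\<epsilon>/d)\<rfloor>"
  have lg: "0 < log 2 (\<epsilon>/d)" using assms by simp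
  have k1: "real k \<le> log 2 (\<epsilon>/d)" unfolding k_def using lg by linarith
  have k2: "log 2 (\<epsilon>/d) < real k + 1" unfolding k_def using lg by linarith
  have "2^k = 2 powr (real k)" by (simp add: powr_realpow)
  also have "\<dots> \<le> 2 powr (log 2 (\<epsilon>/d))" using k1 by simp
  also have "\<dots> = \<epsilon>/d" using assms by simp
  finally have a: "2^k \<le> \<epsilon>/d" .
  have "\<epsilon>/d = 2 powr (log 2 (\<epsilon>/d))" using assms by simp
  also have "\<dots> < 2 powr (real (k+1))" using k2 by simp
  also have "\<dots> = 2^(k+1)" by (rule powr_realpow) simp
  finally have b: "\<epsilon>/d < 2^(k+1)" .
  show ?thesis
    using a b assms by (intro exI[of _ k]) (simp add: field_simps)
qed


lemma cyl_Q: "z \<in> cyl r \<Longrightarrow> 0 \<le> r \<Longrightarrow> z \<in> Q r"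
proof -
  assume z: "z \<in> cyl r" and r: "0 \<le> r"
  have a: "(z$2)\<^sup>2 \<le> r\<^sup>2" "(z$3)\<^sup>2 \<le> r\<^sup>2" using z unfolding cyl_def
    by (auto intro: order_trans[of _ "(z$2)\<^sup>2 + (z$3)\<^sup>2"])
  have b: "\<bar>z$2\<bar> \<le> r" "\<bar>z$3\<bar> \<le> r" using a r by (auto simp: power2_le_iff_abs_le)
  have c: "0 \<le> z$1" "z$1 \<le> 1/4" using z unfolding cyl_def by auto
  show "z \<in> Q r" unfolding Q_def mem_box_cart forall_3 using b c by (simp add: abs_le_iff)
qed

lemma integral_bound:
  fixes x :: "real^3" and r \<epsilon> :: real
  assumes r: "0 < r" "r < 1/5" and e: "0 < \<epsilon>" "\<epsilon> < 1/16"
  shows "(\<integral>\<^sup>+ z. ennreal (indicator (ball x \<epsilon>) z * \<bar>U r z\<bar> / norm (z - x)) \<partial>lborel) \<le> ennreal (h \<epsilon>)"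
proof -
  note Lf = L_facts[OF r]
  have "0 < r\<^sup>2 * (- ln r) * ln (- ln r)" using Lf r by (intro mult_pos_pos) auto
  then have vp: "0 \<le> varrho r" unfolding varrho_def Lf(3) by simp
  define \<rho> :: "nat \<Rightarrow> real" where "\<rho> k = \<epsilon>/2^k" for k
  have \<rho>p: "0 < \<rho> k" for k unfolding \<rho>_def using e by simp
  define f where "f k z = ennreal (2 * varrho r / \<rho> k) * indicator (cball x (\<rho> k) \<inter> Q r) z" for k z
  have ptw: "ennreal (indicator (ball x \<epsilon>) z * \<bar>U r z\<bar> / norm (z - x)) \<le> (\<Sum>k. f k z)" for z
  proof (cases "z \<in> ball x \<epsilon> \<and> z \<in> cyl r \<and> z \<noteq> x")
    case False
    then have "indicator (ball x \<epsilon>) z * \<bar>U r z\<bar> / norm (z - x) = 0"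
      unfolding U_def by auto
    then show ?thesis by (metis ennreal_0 zero_le)
  next
    case True
    define d where "d = norm (z - x)"
    have d: "0 < d" "d < \<epsilon>" using True by (auto simp: d_def dist_norm norm_minus_commute)
    obtain k where k: "\<epsilon>/2^(k+1) < d" "d \<le> \<epsilon>/2^k" using exists_k[OF d] by blast
    have zS: "z \<in> cball x (\<rho> k) \<inter> Q r"
      using True k cyl_Q[of z r] r by (auto simp: \<rho>_def d_def dist_norm norm_minus_commute)
    have "indicator (ball x \<epsilon>) z * \<bar>U r z\<bar> / norm (z - x) = varrho r / d"
      using True vp unfolding U_def d_def by simp
    also have "\<dots> \<le> 2 * varrho r / \<rho> k"
    proof -
      have "\<rho> k \<le> 2 * d" using k unfolding \<rho>_def by (simp add: field_simps)
      then have "varrho r * \<rho> k \<le> varrho r * (2 * d)" using vp by (rule mult_left_mono)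
      then show ?thesis using vp d \<rho>p[of k] by (simp add: field_simps)
    qed
    finally have "ennreal (indicator (ball x \<epsilon>) z * \<bar>U r z\<bar> / norm (z - x)) \<le> f k z"
      unfolding f_def using zS by (simp add: ennreal_leI)
    also have "f k z \<le> (\<Sum>k. f k z)"
      using sum_le_suminf[of "\<lambda>k. f k z" "{k}"] by (simp add: summableI)
    finally show ?thesis .
  qed
  have meas: "f k \<in> borel_measurable lborel" for k
    unfolding f_def using S_sets by (intro borel_measurable_times_ennreal borel_measurable_const borel_measurable_indicator) simp
  have "(\<integral>\<^sup>+ z. ennreal (indicator (ball x \<epsilon>) z * \<bar>U r z\<bar> / norm (z - x)) \<partial>lborel) \<le> (\<integral>\<^sup>+ z. (\<Sum>k. f k z) \<partial>lborel)"
    by (rule nn_integral_mono) (rule ptw)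
  also have "\<dots> = (\<Sum>k. integral\<^sup>N lborel (f k))"
    by (rule nn_integral_suminf[OF meas])
  also have "\<dots> \<le> (\<Sum>k. ennreal (16 * varrho r * (min (\<epsilon>/2^k) r)\<^sup>2))"
  proof (rule suminf_le)
    fix k
    have "integral\<^sup>N lborel (f k) = ennreal (2 * varrho r / \<rho> k) * emeasure lborel (cball x (\<rho> k) \<inter> Q r)"
      unfolding f_def by (rule nn_integral_cmult_indicator[OF S_sets])
    also have "\<dots> \<le> ennreal (2 * varrho r / \<rho> k) * ennreal (8 * \<rho> k * (min (\<rho> k) r)\<^sup>2)"
      by (intro mult_left_mono meas_S \<rho>p r) simp
    also have "\<dots> = ennreal (2 * varrho r / \<rho> k * (8 * \<rho> k * (min (\<rho> k) r)\<^sup>2))"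
      by (rule ennreal_mult[symmetric]) (use vp \<rho>p[of k] in auto)
    also have "2 * varrho r / \<rho> k * (8 * \<rho> k * (min (\<rho> k) r)\<^sup>2) = 16 * varrho r * (min (\<epsilon>/2^k) r)\<^sup>2"
      using \<rho>p[of k] unfolding \<rho>_def by (simp add: field_simps)
    finally show "integral\<^sup>N lborel (f k) \<le> ennreal (16 * varrho r * (min (\<epsilon>/2^k) r)\<^sup>2)" .
  qed (simp_all add: summableI)
  also have "\<dots> = ennreal (\<Sum>k. 16 * varrho r * (min (\<epsilon>/2^k) r)\<^sup>2)"
    using vp g_summable(1)[OF e(1) r(1)] by (intro suminf_ennreal2 summable_mult) auto
  also have "(\<Sum>k. 16 * varrho r * (min (\<epsilon>/2^k) r)\<^sup>2) = 16 * varrho r * (\<Sum>k. (min (\<epsilon>/2^k) r)\<^sup>2)"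
    using g_summable(1)[OF e(1) r(1)] by (rule suminf_mult)
  also have "ennreal \<dots> \<le> ennreal (h \<epsilon>)"
    using real_bound[OF r e] by (rule ennreal_leI)
  finally show ?thesis .
qed


lemma h_tendsto: "(h \<longlongrightarrow> 0) (at_right 0)"
  unfolding h_def by real_asymp

theorem lemma4p1:
  shows "((\<lambda>\<epsilon>::real. SUP p \<in> UNIV \<times> {0<..<1/5}.
            (\<integral>\<^sup>+ z. ennreal (indicator (ball (fst p) \<epsilon>) z * \<bar>U (snd p) z\<bar> / norm (z - fst p)) \<partial>lborel))
         \<longlongrightarrow> 0) (at_right 0)"
proof (rule tendsto_sandwich[where f = "\<lambda>_. 0" and h = "\<lambda>\<epsilon>. ennreal (h \<epsilon>)"])
  show "\<forall>\<^sub>F \<epsilon> in at_right 0. 0 \<le> (SUP p \<in> UNIV \<times> {0<..<1/5::real}.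
            (\<integral>\<^sup>+ z. ennreal (indicator (ball (fst p) \<epsilon>) z * \<bar>U (snd p) z\<bar> / norm (z - fst p)) \<partial>lborel))"
    by simp
  show "\<forall>\<^sub>F \<epsilon> in at_right 0. (SUP p \<in> UNIV \<times> {0<..<1/5::real}.
            (\<integral>\<^sup>+ z. ennreal (indicator (ball (fst p) \<epsilon>) z * \<bar>U (snd p) z\<bar> / norm (z - fst p)) \<partial>lborel))
          \<le> ennreal (h \<epsilon>)"
  proof -
    have ev: "eventually (\<lambda>x. x \<in> {0<..<1/16}) (at_right (0::real))"
      by (rule eventually_at_right_real) simp
    show ?thesis using ev
  proof (rule eventually_mono)
    fix \<epsilon> :: real assume e: "\<epsilon> \<in> {0<..<1/16}"
    show "(SUP p \<in> UNIV \<times> {0<..<1/5::real}.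
            (\<integral>\<^sup>+ z. ennreal (indicator (ball (fst p) \<epsilon>) z * \<bar>U (snd p) z\<bar> / norm (z - fst p)) \<partial>lborel))
          \<le> ennreal (h \<epsilon>)"
    proof (rule SUP_least)
      fix p :: "(real^3) \<times> real" assume "p \<in> UNIV \<times> {0<..<1/5::real}"
      then show "(\<integral>\<^sup>+ z. ennreal (indicator (ball (fst p) \<epsilon>) z * \<bar>U (snd p) z\<bar> / norm (z - fst p)) \<partial>lborel) \<le> ennreal (h \<epsilon>)"
        using e by (intro integral_bound) auto
    qed
  qed
  qed
  show "((\<lambda>_. 0::ennreal) \<longlongrightarrow> 0) (at_right 0)" by simp
  show "((\<lambda>\<epsilon>. ennreal (h \<epsilon>)) \<longlongrightarrow> 0) (at_right (0::real))"
    using tendsto_ennrealI[OF h_tendsto] by simp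
qed

end
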